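(* Fix $d\ge1$. There is a constant $C_0$ depending only on $d$ such that the following holds for all sufficiently large $n$. Let $P\subset B_\infty^d(1)$ with $|P|=n$ and let $\sigma:P\to\{-1,+1\}$ be any coloring. Let $w=\frac{1}{C_0\log^2 n}$ and $S_0=\mathrm{Grid}_d(w)\cap B_\infty^d(\sqrt{3\log n}+3)$. Then \[\sup_{x\in B_\infty^d(\sqrt{3\log n}+3)}\left|\sum_{p\in P}\sigma(p)e^{2\|p\|^2}e^{-\frac13\|x-3p\|^2}\right|\le 4\sup_{s\in S_0}\left|\sum_{p\in P}\sigma(p)e^{2\|p\|^2}e^{-\frac13\|s-3p\|^2}\right|+7.\]
   Context: $\log$ is the natural logarithm. $B_\infty^d(r)=\{x\in\mathbb{R}^d:|x_j|<r\text{ for all }j=1,\dots,d\}$. $\mathrm{Grid}_d(\gamma)=\{(\gamma i_1,\dots,\gamma i_d): i_1,\dots,i_d\in\mathbb{Z}\}$. $\|\cdot\|$ is the Euclidean norm. *)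

theory Defs
  imports "HOL-Analysis.Analysis"
begin

definition box_inf :: "real \<Rightarrow> (real ^ 'n) set" where
  "box_inf r = {x. \<forall>j. \<bar>x $ j\<bar> < r}"

definition grid :: "real \<Rightarrow> (real ^ 'n) set" where
  "grid \<gamma> = {x. \<exists>k :: 'n \<Rightarrow> int. \<forall>j. x $ j = \<gamma> * of_int (k j)}"

end

theory Submission
  imports Defs "HOL-Computational_Algebra.Polynomial"
begin


lemma prod_left_fact: "(\<Prod>j<k. real k - real j) = fact k"
proof (induction k)
  case 0 then show ?case by simp
next
  case (Suc k)
  have "(\<Prod>j<Suc k. real (Suc k) - real j) = real (Suc k) * (\<Prod>j<k. real (Suc k) - real (Suc j))"
    by (subst prod.lessThan_Suc_shift) simp
  also have "(\<Prod>j<k. real (Suc k) - real (Suc j)) = (\<Prod>j<k. real k - real j)" by simp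
  finally show ?case using Suc by simp
qed

lemma prod_right_fact: "(\<Prod>j\<in>{k<..k+n}. real j - real k) = fact n"
proof (induction n)
  case 0 then show ?case by simp
next
  case (Suc n)
  have "{k<..k+Suc n} = insert (k + Suc n) {k<..k+n}" by auto
  then have "(\<Prod>j\<in>{k<..k+Suc n}. real j - real k) = (real (k + Suc n) - real k) * (\<Prod>j\<in>{k<..k+n}. real j - real k)"
    by simp
  then show ?case using Suc by simp
qed

lemma prod_abs_diff_fact:
  assumes "k \<le> N"
  shows "(\<Prod>j\<in>{0..N}-{k}. \<bar>real k - real j\<bar>) = fact k * fact (N - k)"
proof -
  have split: "{0..N}-{k} = {..<k} \<union> {k<..k+(N-k)}" using assms by auto
  have "(\<Prod>j\<in>{0..N}-{k}. \<bar>real k - real j\<bar>) = (\<Prod>j\<in>{..<k}. \<bar>real k - real j\<bar>) * (\<Prod>j\<in>{k<..k+(N-k)}. \<bar>real k - real j\<bar>)"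
    unfolding split by (rule prod.union_disjoint) auto
  also have "(\<Prod>j\<in>{..<k}. \<bar>real k - real j\<bar>) = (\<Prod>j<k. real k - real j)"
    by (rule prod.cong) auto
  also have "(\<Prod>j\<in>{k<..k+(N-k)}. \<bar>real k - real j\<bar>) = (\<Prod>j\<in>{k<..k+(N-k)}. real j - real k)"
    by (rule prod.cong) auto
  finally show ?thesis by (simp add: prod_left_fact prod_right_fact)
qed

lemma fact_sq_le: 
  assumes "k \<le> 2*m"
  shows "(fact m * fact m :: real) \<le> fact k * fact (2*m - k)"
proof -
  have e1: "fact k * fact (2*m - k) * real ((2*m) choose k) = fact (2*m)"
    using binomial_fact_lemma[OF assms] by (metis of_nat_fact of_nat_mult)
  have e2: "fact m * fact m * real ((2*m) choose m) = fact (2*m)"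
    using binomial_fact_lemma[of m "2*m"] by (metis diff_le_self mult_2 add_diff_cancel_left' of_nat_fact of_nat_mult)
  have c: "real ((2*m) choose k) \<le> real ((2*m) choose m)" using binomial_maximum'[of m k] by simp
  have pos: "real ((2*m) choose k) > 0" using assms by simp
  have "fact m * fact m * real ((2*m) choose k) \<le> fact m * fact m * real ((2*m) choose m)"
    by (rule mult_left_mono[OF c]) simp
  also have "\<dots> = fact k * fact (2*m - k) * real ((2*m) choose k)" using e1 e2 by simp
  finally show ?thesis using pos by simp
qed



lemma pderiv_sum': "pderiv (sum f A) = (\<Sum>x\<in>A. pderiv (f x))"
  using higher_pderiv_sum[of 1 f A] by simp

lemma lagrange_deriv:
  fixes R :: "real poly" and m :: nat and h M :: real
  assumes m: "m \<ge> 1" and h: "h > 0" and deg: "degree R \<le> 2*m" and R0: "poly R 0 = 0"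
    and bnd: "\<And>k. k \<le> 2*m \<Longrightarrow> \<bar>poly R ((real k - real m) * h)\<bar> \<le> M"
  shows "\<bar>poly (pderiv R) 0\<bar> \<le> 2*m*M/h"
proof -
  define x where "x k = (real k - real m) * h" for k :: nat
  define J where "J = {0..2*m} - {m}"
  define D where "D k = x k * (\<Prod>j\<in>J-{k}. x k - x j)" for k
  define Q where "Q k = (\<Prod>j\<in>J-{k}. [:- x j, 1:])" for k
  define L where "L = (\<Sum>k\<in>J. smult (poly R (x k) / D k) ([:0,1:] * Q k))"
  have xinj: "x j = x k \<longleftrightarrow> j = k" for j k using h by (auto simp: x_def)
  have x0: "x k = 0 \<longleftrightarrow> k = m" for k using h by (auto simp: x_def)
  have xd: "x k - x j = h * (real k - real j)" for k j by (simp add: x_def algebra_simps)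
  have finJ: "finite J" by (simp add: J_def)
  have cardJ: "card J = 2*m" unfolding J_def using m by (subst card_Diff_singleton) auto
  have D0: "D k \<noteq> 0" if "k \<in> J" for k
    using that x0 xinj finJ by (auto simp: D_def J_def)
  have polyQ: "poly ([:0,1:] * Q k) (x j) = (if j = k then D k else 0)" if "k \<in> J" "j \<le> 2*m" for k j
  proof (cases "j = k")
    case True then show ?thesis by (simp add: Q_def D_def poly_prod)
  next
    case False
    show ?thesis
    proof (cases "j = m")
      case True then show ?thesis using False x0 by simp
    next
      case jm: False
      have "j \<in> J - {k}" using that False jm by (auto simp: J_def)
      then have "poly (Q k) (x j) = 0" unfolding Q_def poly_prod
        by (intro prod_zero) (use finJ in auto)
      then show ?thesis using False by simp
    qed
  qed
  have Lx: "poly L (x j) = poly R (x j)" if "j \<le> 2*m" for j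
  proof -
    have "poly L (x j) = (\<Sum>k\<in>J. poly R (x k) / D k * (if j = k then D k else 0))"
      unfolding L_def poly_sum poly_smult by (rule sum.cong) (use polyQ that in auto)
    also have "\<dots> = (\<Sum>k\<in>J. if k = j then poly R (x k) else 0)"
      by (rule sum.cong) (use D0 in auto)
    also have "\<dots> = (if j \<in> J then poly R (x j) else 0)"
      using finJ by (simp add: sum.delta)
    also have "\<dots> = poly R (x j)"
      using that R0 x0[of m] by (auto simp: J_def)
    finally show ?thesis .
  qed
  have degQ: "degree ([:0,1:] * Q k) \<le> 2*m" if "k \<in> J" for k
  proof -
    have "degree (Q k) \<le> (\<Sum>j\<in>J-{k}. degree [:- x j, 1:])"
      unfolding Q_def using degree_prod_sum_le[of "J-{k}" "\<lambda>j. [:- x j, 1:]"] finJ by (simp add: o_def)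
    also have "\<dots> = card (J - {k})" by simp
    also have "\<dots> = 2*m - 1" using that cardJ finJ by simp
    finally have "degree (Q k) \<le> 2*m - 1" .
    then have "degree ([:0,1:] * Q k) \<le> 1 + (2*m - 1)"
      using degree_mult_le[of "[:0,1:]" "Q k"] by simp
    then show ?thesis using m by simp
  qed
  have degL: "degree L \<le> 2*m" unfolding L_def
    by (rule degree_sum_le[OF finJ]) (meson degQ degree_smult_le order_trans)
  have RL: "R = L"
  proof (rule poly_eqI_degree[of "x ` {0..2*m}"])
    show "\<And>y. y \<in> x ` {0..2 * m} \<Longrightarrow> poly R y = poly L y" using Lx by auto
    have "card (x ` {0..2*m}) = 2*m+1"
      by (subst card_image) (auto simp: inj_on_def xinj)
    then show "degree R < card (x ` {0..2*m})" "degree L < card (x ` {0..2*m})" using deg degL by auto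
  qed
  have dQ: "poly (pderiv ([:0,1:] * Q k)) 0 = (\<Prod>j\<in>J-{k}. - x j)" for k
    by (simp add: pderiv_mult pderiv_pCons Q_def poly_prod)
  have dR: "poly (pderiv R) 0 = (\<Sum>k\<in>J. poly R (x k) / D k * (\<Prod>j\<in>J-{k}. - x j))"
  proof -
    have "poly (pderiv R) 0 = poly (pderiv L) 0" using RL by (rule arg_cong)
    also have "\<dots> = (\<Sum>k\<in>J. poly R (x k) / D k * (\<Prod>j\<in>J-{k}. - x j))"
      unfolding L_def by (simp only: pderiv_sum' pderiv_smult poly_sum poly_smult dQ)
    finally show ?thesis .
  qed
  have coef: "\<bar>(\<Prod>j\<in>J-{k}. - x j) / D k\<bar> \<le> 1/h" if k: "k \<in> J" for k
  proof -
    have km: "k \<le> 2*m" "k \<noteq> m" using k by (auto simp: J_def)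
    have "\<bar>\<Prod>j\<in>J-{k}. - x j\<bar> = (\<Prod>j\<in>J-{k}. h * \<bar>real j - real m\<bar>)"
      unfolding abs_prod by (rule prod.cong) (use h in \<open>auto simp: x_def abs_mult\<close>)
    also have "\<dots> = h ^ (2*m-1) * (\<Prod>j\<in>J-{k}. \<bar>real m - real j\<bar>)"
      using finJ k cardJ by (simp add: prod.distrib abs_minus_commute[of "real _" "real m"])
    finally have num: "\<bar>\<Prod>j\<in>J-{k}. - x j\<bar> = h ^ (2*m-1) * (\<Prod>j\<in>J-{k}. \<bar>real m - real j\<bar>)" .
    have "\<bar>D k\<bar> = \<bar>x k\<bar> * (\<Prod>j\<in>J-{k}. h * \<bar>real k - real j\<bar>)"
      unfolding D_def abs_mult abs_prod by (intro arg_cong2[where f="(*)"] refl prod.cong) (use h xd in \<open>auto simp: abs_mult\<close>)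
    also have "\<dots> = h * \<bar>real k - real m\<bar> * (h ^ (2*m-1) * (\<Prod>j\<in>J-{k}. \<bar>real k - real j\<bar>))"
      using finJ k cardJ h by (simp add: prod.distrib x_def abs_mult)
    finally have den: "\<bar>D k\<bar> = h * h ^ (2*m-1) * (\<bar>real k - real m\<bar> * (\<Prod>j\<in>J-{k}. \<bar>real k - real j\<bar>))"
      by (simp add: algebra_simps)
    have p1: "\<bar>real k - real m\<bar> * (\<Prod>j\<in>J-{k}. \<bar>real k - real j\<bar>) = fact k * fact (2*m - k)"
    proof -
      have "{0..2*m} - {k} = insert m (J - {k})" using km by (auto simp: J_def)
      then have "(\<Prod>j\<in>{0..2*m}-{k}. \<bar>real k - real j\<bar>) = \<bar>real k - real m\<bar> * (\<Prod>j\<in>J-{k}. \<bar>real k - real j\<bar>)"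
        using finJ by (simp add: J_def)
      then show ?thesis using prod_abs_diff_fact[OF km(1)] by simp
    qed
    have p2: "\<bar>real m - real k\<bar> * (\<Prod>j\<in>J-{k}. \<bar>real m - real j\<bar>) = fact m * fact m"
    proof -
      have "(\<Prod>j\<in>J. \<bar>real m - real j\<bar>) = \<bar>real m - real k\<bar> * (\<Prod>j\<in>J-{k}. \<bar>real m - real j\<bar>)"
        by (rule prod.remove[OF finJ k])
      then show ?thesis using prod_abs_diff_fact[of m "2*m"] by (simp add: J_def)
    qed
    have ge1: "\<bar>real m - real k\<bar> \<ge> 1" using km by linarith
    have Pnn: "(\<Prod>j\<in>J-{k}. \<bar>real m - real j\<bar>) \<ge> 0" by (simp add: prod_nonneg)
    have "(\<Prod>j\<in>J-{k}. \<bar>real m - real j\<bar>) \<le> \<bar>real m - real k\<bar> * (\<Prod>j\<in>J-{k}. \<bar>real m - real j\<bar>)"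
      using ge1 Pnn by (simp add: mult_le_cancel_right1)
    also have "\<dots> \<le> \<bar>real k - real m\<bar> * (\<Prod>j\<in>J-{k}. \<bar>real k - real j\<bar>)"
      using p1 p2 fact_sq_le[OF km(1)] by simp
    finally have key: "(\<Prod>j\<in>J-{k}. \<bar>real m - real j\<bar>) \<le> \<bar>real k - real m\<bar> * (\<Prod>j\<in>J-{k}. \<bar>real k - real j\<bar>)" .
    have Dpos: "\<bar>D k\<bar> > 0" using D0 k by simp
    have "\<bar>(\<Prod>j\<in>J-{k}. - x j) / D k\<bar> = h ^ (2*m-1) * (\<Prod>j\<in>J-{k}. \<bar>real m - real j\<bar>) / \<bar>D k\<bar>"
      by (simp add: abs_divide num)
    also have "\<dots> \<le> h ^ (2*m-1) * (\<bar>real k - real m\<bar> * (\<Prod>j\<in>J-{k}. \<bar>real k - real j\<bar>)) / \<bar>D k\<bar>"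
      using key h Dpos by (intro divide_right_mono mult_left_mono) auto
    also have "\<dots> = 1/h"
    proof -
      have nz: "h ^ (2*m-1) * (\<bar>real k - real m\<bar> * (\<Prod>j\<in>J-{k}. \<bar>real k - real j\<bar>)) \<noteq> 0"
        using Dpos den h by auto
      have "\<bar>D k\<bar> = h * (h ^ (2*m-1) * (\<bar>real k - real m\<bar> * (\<Prod>j\<in>J-{k}. \<bar>real k - real j\<bar>)))"
        using den by simp
      then show ?thesis using nz h by simp
    qed
    finally show ?thesis .
  qed
  have "\<bar>poly (pderiv R) 0\<bar> \<le> (\<Sum>k\<in>J. \<bar>poly R (x k) / D k * (\<Prod>j\<in>J-{k}. - x j)\<bar>)"
    unfolding dR by (rule sum_abs)
  also have "\<dots> \<le> (\<Sum>k\<in>J. M * (1/h))"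
  proof (rule sum_mono)
    fix k assume k: "k \<in> J"
    have "\<bar>poly R (x k) / D k * (\<Prod>j\<in>J-{k}. - x j)\<bar> = \<bar>poly R (x k)\<bar> * \<bar>(\<Prod>j\<in>J-{k}. - x j) / D k\<bar>"
      by (simp add: abs_mult abs_divide)
    also have "\<dots> \<le> M * (1/h)"
      using bnd[of k] k coef[OF k] by (intro mult_mono) (auto simp: J_def x_def)
    finally show "\<bar>poly R (x k) / D k * (\<Prod>j\<in>J-{k}. - x j)\<bar> \<le> M * (1/h)" .
  qed
  also have "\<dots> = 2*m*M/h" using cardJ by simp
  finally show ?thesis .
qed



lemma markov_center:
  fixes Q :: "real poly" and m :: nat and h M :: real
  assumes m: "m \<ge> 1" and h: "h > 0" and deg: "degree Q \<le> 2*m"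
    and bnd: "\<And>k. k \<le> 2*m \<Longrightarrow> \<bar>poly Q ((real k - real m) * h)\<bar> \<le> M"
  shows "\<bar>poly (pderiv Q) 0\<bar> \<le> 4*m*M/h"
proof -
  define R where "R = Q - [:poly Q 0:]"
  have degR: "degree R \<le> 2*m" unfolding R_def
    using deg by (auto intro!: degree_diff_le)
  have R0: "poly R 0 = 0" by (simp add: R_def)
  have bR: "\<bar>poly R ((real k - real m) * h)\<bar> \<le> 2*M" if "k \<le> 2*m" for k
  proof -
    have "\<bar>poly Q 0\<bar> \<le> M" using bnd[of m] by simp
    then show ?thesis using bnd[OF that] by (simp add: R_def)
  qed
  have "pderiv R = pderiv Q" by (simp add: R_def pderiv_diff)
  then have "\<bar>poly (pderiv Q) 0\<bar> \<le> 2*m*(2*M)/h"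
    using lagrange_deriv[OF m h degR R0 bR] by simp
  then show ?thesis by simp
qed

lemma markov_shift:
  fixes P :: "real poly" and m :: nat and h M t :: real
  assumes m: "m \<ge> 1" and h: "h > 0" and deg: "degree P \<le> 2*m"
    and bnd: "\<And>k. k \<le> 2*m \<Longrightarrow> \<bar>poly P (t + (real k - real m) * h)\<bar> \<le> M"
  shows "\<bar>poly (pderiv P) t\<bar> \<le> 4*m*M/h"
proof -
  define Q where "Q = pcompose P [:t,1:]"
  have degQ: "degree Q \<le> 2*m" unfolding Q_def using degree_pcompose_le[of P "[:t,1:]"] deg by simp
  have pQ: "poly Q y = poly P (t + y)" for y by (simp add: Q_def poly_pcompose)
  have "pderiv Q = pcompose (pderiv P) [:t,1:] * pderiv [:t,1:]"
    unfolding Q_def by (rule pderiv_pcompose)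
  then have "poly (pderiv Q) 0 = poly (pderiv P) t" by (simp add: poly_pcompose pderiv_pCons)
  with markov_center[OF m h degQ] bnd pQ show ?thesis by simp
qed

lemma poly_diff_bound:
  fixes P :: "real poly" and \<psi> :: "real \<Rightarrow> real" and K :: nat and \<delta> \<epsilon> M :: real
  assumes K: "K \<ge> 1" and deg: "degree P \<le> 2*K"
    and approx: "\<And>\<tau>. \<bar>\<tau>\<bar> \<le> 3 \<Longrightarrow> \<bar>\<psi> \<tau> - poly P \<tau>\<bar> \<le> \<epsilon>"
    and glob: "\<And>\<tau>. \<bar>\<psi> \<tau>\<bar> \<le> M"
    and \<delta>: "0 < \<delta>" "\<delta> \<le> 1"
  shows "\<bar>\<psi> \<delta> - \<psi> 0\<bar> \<le> 2*\<epsilon> + \<delta> * (4 * K^2 * (M + \<epsilon>))"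
proof -
  obtain t where t: "0 < t" "t < \<delta>" "poly P \<delta> - poly P 0 = (\<delta> - 0) * poly (pderiv P) t"
    using poly_MVT[of 0 \<delta> P] \<delta> by auto
  have hK: "1 / real K > 0" using K by simp
  have nodes: "\<bar>poly P (t + (real k - real K) * (1/real K))\<bar> \<le> M + \<epsilon>" if "k \<le> 2*K" for k
  proof -
    let ?y = "t + (real k - real K) * (1/real K)"
    have "\<bar>(real k - real K) * (1/real K)\<bar> \<le> 1"
      using that K by (auto simp: abs_le_iff field_simps)
    then have "\<bar>?y\<bar> \<le> 3" using t \<delta> abs_triangle_ineq[of t "(real k - real K) * (1/real K)"] by linarith
    then have "\<bar>\<psi> ?y - poly P ?y\<bar> \<le> \<epsilon>" by (rule approx)
    then show ?thesis using glob[of ?y] by linarith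
  qed
  have dP: "\<bar>poly (pderiv P) t\<bar> \<le> 4*K*(M+\<epsilon>)/(1/real K)"
    by (rule markov_shift[OF K hK deg nodes])
  then have dP': "\<bar>poly (pderiv P) t\<bar> \<le> 4 * K^2 * (M+\<epsilon>)" by (simp add: power2_eq_square mult_ac)
  have "\<bar>poly P \<delta> - poly P 0\<bar> \<le> \<delta> * (4 * K^2 * (M+\<epsilon>))"
    using t(3) dP' \<delta> by (simp add: abs_mult mult_left_mono)
  moreover have "\<bar>\<psi> \<delta> - poly P \<delta>\<bar> \<le> \<epsilon>" using approx \<delta> by simp
  moreover have "\<bar>\<psi> 0 - poly P 0\<bar> \<le> \<epsilon>" using approx by simp
  ultimately show ?thesis by linarith
qed

lemma exp_taylor_err:
  fixes y :: real
  shows "\<bar>exp y - (\<Sum>j<K. y^j / fact j)\<bar> \<le> \<bar>y\<bar>^K / fact K * exp \<bar>y\<bar>"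
proof -
  obtain t where t: "\<bar>t\<bar> \<le> \<bar>y\<bar>" "exp y = (\<Sum>m<K. (y ^ m) / fact m) + (exp t / fact K) * y ^ K"
    using Maclaurin_exp_le by blast
  have "\<bar>exp y - (\<Sum>j<K. y^j / fact j)\<bar> = exp t / fact K * \<bar>y\<bar>^K"
    using t(2) by (simp add: abs_mult power_abs)
  also have "\<dots> \<le> exp \<bar>y\<bar> / fact K * \<bar>y\<bar>^K"
    using t(1) by (intro mult_right_mono divide_right_mono) auto
  finally show ?thesis by (simp add: mult.commute)
qed

lemma fact_lower: "real K ^ K / fact K \<le> exp (real K)"
proof -
  obtain t where t: "\<bar>t\<bar> \<le> \<bar>real K\<bar>" "exp (real K) = (\<Sum>m<Suc K. (real K ^ m) / fact m) + (exp t / fact (Suc K)) * real K ^ Suc K"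
    using Maclaurin_exp_le by blast
  have "real K ^ K / fact K \<le> (\<Sum>m<Suc K. (real K ^ m) / fact m)"
    by (rule member_le_sum[of K "{..<Suc K}" "\<lambda>m. real K ^ m / fact m"]) auto
  also have "\<dots> \<le> exp (real K)" using t(2) by simp
  finally show ?thesis .
qed



lemma taylor_poly:
  fixes S :: "'a set" and A b :: "'a \<Rightarrow> real" and K :: nat and B :: real
  assumes fin: "finite S" and K: "K \<ge> 1" and Bb: "\<And>p. p \<in> S \<Longrightarrow> 2 * \<bar>b p\<bar> + 3 \<le> B"
  shows "\<exists>Pp. degree Pp \<le> 2*K \<and> (\<forall>\<tau>. \<bar>\<tau>\<bar> \<le> 3 \<longrightarrow>
     \<bar>(\<Sum>p\<in>S. A p * exp (-(2*\<tau>*b p + \<tau>^2)/3)) - poly Pp \<tau>\<bar> \<le> (\<Sum>p\<in>S. \<bar>A p\<bar>) * (B^K / fact K * exp B))"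
proof -
  define Y where "Y p = [:0, -2*b p/3, -1/3:]" for p
  define Pp where "Pp = (\<Sum>p\<in>S. smult (A p) (\<Sum>j<K. smult (1/fact j) (Y p ^ j)))"
  have polyY: "poly (Y p) \<tau> = -(2*\<tau>*b p + \<tau>^2)/3" for p \<tau>
    by (simp add: Y_def algebra_simps power2_eq_square)
  have degY: "degree (Y p) \<le> 2" for p by (simp add: Y_def)
  have degYj: "degree (smult (1/fact j) (Y p ^ j)) \<le> 2*K" if "j < K" for p j
  proof -
    have "degree (smult (1/fact j) (Y p ^ j)) \<le> degree (Y p) * j"
      using degree_smult_le degree_power_le order_trans by blast
    also have "\<dots> \<le> 2 * j" using degY[of p] by simp
    also have "\<dots> \<le> 2*K" using that by simp
    finally show ?thesis .
  qed
  have degP: "degree Pp \<le> 2*K" unfolding Pp_def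
    apply (rule degree_sum_le[OF fin])
    apply (rule order_trans[OF degree_smult_le])
    apply (rule degree_sum_le)
    using degYj by auto
  have polyP: "poly Pp \<tau> = (\<Sum>p\<in>S. A p * (\<Sum>j<K. (-(2*\<tau>*b p + \<tau>^2)/3)^j / fact j))" for \<tau>
    unfolding Pp_def by (simp add: poly_sum polyY)
  have "\<bar>(\<Sum>p\<in>S. A p * exp (-(2*\<tau>*b p + \<tau>^2)/3)) - poly Pp \<tau>\<bar> \<le> (\<Sum>p\<in>S. \<bar>A p\<bar>) * (B^K / fact K * exp B)"
    if t: "\<bar>\<tau>\<bar> \<le> 3" for \<tau>
  proof -
    have "(\<Sum>p\<in>S. A p * exp (-(2*\<tau>*b p + \<tau>^2)/3)) - poly Pp \<tau>
        = (\<Sum>p\<in>S. A p * (exp (-(2*\<tau>*b p + \<tau>^2)/3) - (\<Sum>j<K. (-(2*\<tau>*b p + \<tau>^2)/3)^j / fact j)))"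
      unfolding polyP by (simp add: sum_subtractf algebra_simps)
    also have "\<bar>\<dots>\<bar> \<le> (\<Sum>p\<in>S. \<bar>A p\<bar> * (B^K / fact K * exp B))"
    proof (rule order_trans[OF sum_abs], rule sum_mono)
      fix p assume p: "p \<in> S"
      let ?y = "-(2*\<tau>*b p + \<tau>^2)/3"
      have "\<bar>?y\<bar> \<le> (2*\<bar>\<tau>\<bar>*\<bar>b p\<bar> + \<tau>^2)/3"
      proof -
        have "\<bar>2*\<tau>*b p + \<tau>^2\<bar> \<le> 2*\<bar>\<tau>\<bar>*\<bar>b p\<bar> + \<tau>^2"
          using abs_triangle_ineq[of "2*\<tau>*b p" "\<tau>^2"] by (simp add: abs_mult)
        then show ?thesis by simp
      qed
      also have "\<dots> \<le> (2*3*\<bar>b p\<bar> + 9)/3"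
      proof -
        have "\<tau>^2 \<le> 9" using power_mono[OF t abs_ge_zero, of 2] by simp
        moreover have "\<bar>\<tau>\<bar>*\<bar>b p\<bar> \<le> 3*\<bar>b p\<bar>" using t by (simp add: mult_right_mono)
        ultimately show ?thesis by simp
      qed
      also have "\<dots> \<le> B" using Bb[OF p] by simp
      finally have yB: "\<bar>?y\<bar> \<le> B" .
      have "\<bar>A p * (exp ?y - (\<Sum>j<K. ?y^j / fact j))\<bar> = \<bar>A p\<bar> * \<bar>exp ?y - (\<Sum>j<K. ?y^j / fact j)\<bar>"
        by (simp add: abs_mult)
      also have "\<dots> \<le> \<bar>A p\<bar> * (\<bar>?y\<bar>^K / fact K * exp \<bar>?y\<bar>)"
        by (intro mult_left_mono exp_taylor_err) simp
      also have "\<dots> \<le> \<bar>A p\<bar> * (B^K / fact K * exp B)"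
        using yB by (intro mult_left_mono mult_mono divide_right_mono power_mono) auto
      finally show "\<bar>A p * (exp ?y - (\<Sum>j<K. ?y^j / fact j))\<bar> \<le> \<bar>A p\<bar> * (B^K / fact K * exp B)" .
    qed
    also have "\<dots> = (\<Sum>p\<in>S. \<bar>A p\<bar>) * (B^K / fact K * exp B)" by (rule sum_distrib_right[symmetric])
    finally show ?thesis .
  qed
  with degP show ?thesis by blast
qed



lemma norm_sq_cart: "(norm (x :: real^'n))^2 = (\<Sum>j\<in>UNIV. (x$j)^2)"
  unfolding power2_norm_eq_inner inner_vec_def by (simp add: power2_eq_square)

lemma norm_sq_box1:
  assumes "p \<in> box_inf 1"
  shows "(norm (p :: real^'n))^2 \<le> real CARD('n)"
proof -
  have "(\<Sum>j\<in>UNIV. (p$j)^2) \<le> (\<Sum>j\<in>(UNIV::'n set). 1)"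
  proof (rule sum_mono)
    fix j
    have "\<bar>p$j\<bar> < 1" using assms by (simp add: box_inf_def)
    then have "\<bar>p$j\<bar>^2 \<le> 1^2" by (intro power_mono) auto
    then show "(p$j)^2 \<le> 1" by simp
  qed
  then show ?thesis by (simp add: norm_sq_cart)
qed

lemma norm_box:
  assumes "p \<in> box_inf r"
  shows "norm (p :: real^'n) \<le> real CARD('n) * r"
proof -
  have "norm p \<le> (\<Sum>j\<in>UNIV. \<bar>p$j\<bar>)" by (rule norm_le_l1_cart)
  also have "\<dots> \<le> (\<Sum>j\<in>(UNIV::'n set). r)"
    by (rule sum_mono) (use assms in \<open>auto simp: box_inf_def less_imp_le\<close>)
  finally show ?thesis by simp
qed

lemma outside_exponent:
  fixes p y :: "real^'n"
  assumes p: "p \<in> box_inf 1" and y: "y \<notin> box_inf (sqrt (3*L) + 3)" and L: "L \<ge> 0"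
  shows "2 * (norm p)^2 + (- (1/3) * (norm (y - 3 *\<^sub>R p))^2) \<le> 2 * real CARD('n) - L"
proof -
  obtain j where j: "\<bar>y$j\<bar> \<ge> sqrt (3*L) + 3" using y by (auto simp: box_inf_def not_less)
  have pj: "\<bar>p$j\<bar> < 1" using p by (simp add: box_inf_def)
  have "\<bar>(y - 3 *\<^sub>R p)$j\<bar> \<ge> sqrt (3*L)" using j pj by auto
  moreover have "\<bar>(y - 3 *\<^sub>R p)$j\<bar> \<le> norm (y - 3 *\<^sub>R p)" by (rule component_le_norm_cart)
  ultimately have "sqrt (3*L) \<le> norm (y - 3 *\<^sub>R p)" by linarith
  then have "(sqrt (3*L))^2 \<le> (norm (y - 3 *\<^sub>R p))^2" using L by (intro power_mono) auto
  then have "3*L \<le> (norm (y - 3 *\<^sub>R p))^2" using L by simp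
  then show ?thesis using norm_sq_box1[OF p] by simp
qed

lemma round_grid:
  fixes x :: "real^'n"
  assumes w: "w > 0" and x: "x \<in> box_inf R"
  shows "\<exists>s. s \<in> grid w \<and> s \<in> box_inf R \<and> norm (x - s) \<le> real CARD('n) * w"
proof -
  define k where "k j = (if x$j \<ge> 0 then \<lfloor>x$j / w\<rfloor> else \<lceil>x$j / w\<rceil>)" for j
  define s :: "real^'n" where "s = (\<chi> j. w * of_int (k j))"
  have comp: "\<bar>s$j\<bar> \<le> \<bar>x$j\<bar> \<and> \<bar>x$j - s$j\<bar> < w" for j
  proof (cases "x$j \<ge> 0")
    case True
    have a: "of_int \<lfloor>x$j / w\<rfloor> \<le> x$j / w" "x$j / w < of_int \<lfloor>x$j / w\<rfloor> + 1" by linarith+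
    have b: "0 \<le> x$j / w" using True w by simp
    have c: "(0::real) \<le> of_int \<lfloor>x$j / w\<rfloor>" using b by simp
    have "w * of_int \<lfloor>x$j / w\<rfloor> \<le> w * (x$j / w)" using mult_left_mono[OF a(1), of w] w by simp
    moreover have "w * (x$j / w) < w * (of_int \<lfloor>x$j / w\<rfloor> + 1)" using mult_strict_left_mono[OF a(2) w] .
    ultimately have "w * of_int \<lfloor>x$j / w\<rfloor> \<le> x$j" "x$j < w * of_int \<lfloor>x$j / w\<rfloor> + w"
      using w by (simp_all add: algebra_simps)
    moreover have "0 \<le> w * of_int \<lfloor>x$j / w\<rfloor>" using c w by simp
    ultimately show ?thesis using True by (simp add: s_def k_def)
  next
    case False
    have a: "x$j / w \<le> of_int \<lceil>x$j / w\<rceil>" "of_int \<lceil>x$j / w\<rceil> - 1 < x$j / w" by linarith+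
    have b: "x$j / w < 0" using False w by (simp add: divide_neg_pos)
    have c: "of_int \<lceil>x$j / w\<rceil> \<le> (0::real)" using b by (simp add: ceiling_le_zero)
    have "w * (x$j / w) \<le> w * of_int \<lceil>x$j / w\<rceil>" using mult_left_mono[OF a(1), of w] w by simp
    moreover have "w * (of_int \<lceil>x$j / w\<rceil> - 1) < w * (x$j / w)" using mult_strict_left_mono[OF a(2) w] .
    ultimately have "x$j \<le> w * of_int \<lceil>x$j / w\<rceil>" "w * of_int \<lceil>x$j / w\<rceil> - w < x$j"
      using w by (simp_all add: algebra_simps)
    moreover have "w * of_int \<lceil>x$j / w\<rceil> \<le> 0" using c w by (simp add: mult_nonneg_nonpos)
    ultimately show ?thesis using False by (simp add: s_def k_def)
  qed
  have "s \<in> grid w" unfolding grid_def s_def by auto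
  moreover have "s \<in> box_inf R" using x comp by (auto simp: box_inf_def intro: le_less_trans)
  moreover have "norm (x - s) \<le> real CARD('n) * w"
  proof -
    have "norm (x - s) \<le> (\<Sum>j\<in>UNIV. \<bar>(x - s)$j\<bar>)" by (rule norm_le_l1_cart)
    also have "\<dots> \<le> (\<Sum>j\<in>(UNIV::'n set). w)"
      by (rule sum_mono) (use comp in \<open>auto intro: less_imp_le\<close>)
    finally show ?thesis by simp
  qed
  ultimately show ?thesis by blast
qed

lemma line_identity:
  fixes s u v :: "real^'n"
  assumes "norm u = 1"
  shows "(norm (s + \<tau> *\<^sub>R u - v))^2 = (norm (s - v))^2 + 2*\<tau>*(u \<bullet> (s - v)) + \<tau>^2"
proof -
  have "s + \<tau> *\<^sub>R u - v = (s - v) + \<tau> *\<^sub>R u" by (simp add: algebra_simps)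
  then have "(norm (s + \<tau> *\<^sub>R u - v))^2 = (norm ((s - v) + \<tau> *\<^sub>R u))^2" by (rule arg_cong)
  also have "\<dots> = (norm (s - v))^2 + 2 * ((s - v) \<bullet> (\<tau> *\<^sub>R u)) + (norm (\<tau> *\<^sub>R u))^2"
    using dot_norm[of "s - v" "\<tau> *\<^sub>R u"] by simp
  also have "\<dots> = (norm (s - v))^2 + 2*\<tau>*(u \<bullet> (s - v)) + \<tau>^2"
    using assms by (simp add: inner_commute power_mult_distrib)
  finally show ?thesis .
qed



lemma eps_small:
  fixes L B d :: real and K :: nat
  assumes L: "L \<ge> 1" and K: "real K \<ge> L" and Bpos: "B > 0" and cond: "exp 3 * B + 2*d \<le> L" and d: "d \<ge> 0"
  shows "exp L * exp (2*d) * (B^K / fact K * exp B) \<le> 1"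
proof -
  have Kpos: "real K > 0" using K L by linarith
  have f: "real K ^ K / fact K \<le> exp (real K)" by (rule fact_lower)
  have "B^K / fact K = B^K / real K ^ K * (real K ^ K / fact K)" using Kpos by (simp add: field_simps)
  also have "\<dots> \<le> B^K / real K ^ K * exp (real K)"
    using f Bpos Kpos by (intro mult_left_mono) auto
  also have "\<dots> = (exp 1 * B / real K)^K"
    by (simp add: power_divide power_mult_distrib exp_of_nat_mult[symmetric] field_simps)
  finally have a: "B^K / fact K \<le> (exp 1 * B / real K)^K" .
  have "exp 3 * B \<le> real K" using cond K Bpos d by linarith
  then have "exp 1 * B / real K \<le> exp (-2)"
    using Kpos by (simp add: divide_le_eq exp_minus field_simps exp_add[symmetric])
  then have "(exp 1 * B / real K)^K \<le> exp (-2) ^ K" using Bpos Kpos by (intro power_mono) auto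
  also have "\<dots> = exp (-2 * real K)" by (simp add: exp_of_nat_mult[symmetric] mult.commute)
  also have "\<dots> \<le> exp (-2 * L)" using K by simp
  finally have b: "B^K / fact K \<le> exp (-2 * L)" using a by linarith
  have c: "exp (2*d) * exp B \<le> exp L" using cond Bpos
    by (simp add: exp_add[symmetric]) (smt (verit) exp_ge_add_one_self exp_gt_zero mult_le_cancel_right1)
  have "exp L * exp (2*d) * (B^K / fact K * exp B) = exp L * (exp (2*d) * exp B) * (B^K / fact K)" by simp
  also have "\<dots> \<le> exp L * exp L * exp (-2 * L)"
    using b c Bpos by (intro mult_mono) auto
  also have "\<dots> = 1" by (simp add: exp_add[symmetric])
  finally show ?thesis .
qed

lemma aux_half: "(x::real) > 0 \<Longrightarrow> 1/(2*(x+1)) \<le> 1/2"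
  by (simp add: field_simps)

lemma aux_pos: "(x::real) > 0 \<Longrightarrow> 1/(2*(x+1)) > 0"
  by (simp add: field_simps)

lemma aux_id: "(x::real) > 0 \<Longrightarrow> 1/(2*(x+1)) * (x+1) = 1/2"
  by (simp add: field_simps)

lemma aux_c0:
  assumes "(d::real) > 0" "(x::real) > 0" shows "16 * d / (32 * d * (x + 1)) = 1/(2*(x+1))"
proof -
  have "32 * d * (x + 1) > 0" using assms by simp
  then show ?thesis using assms by (simp add: field_simps)
qed

lemma aux_le1:
  assumes "(d::real) \<ge> 1" "(x::real) > 0" shows "d / (32 * d * (x + 1)) \<le> 1"
proof -
  have "32 * d * (x + 1) > 0" using assms by simp
  moreover have "d \<le> 32 * d * (x + 1)" using assms by (simp add: algebra_simps)
  ultimately show ?thesis by (simp only: divide_le_eq_1_pos)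
qed

lemma key_point:
  fixes P :: "(real^'n) set" and \<sigma> :: "real^'n \<Rightarrow> real" and g :: "real^'n \<Rightarrow> real"
  assumes fin: "finite P" and cardP: "card P = n" and Pbox: "P \<subseteq> box_inf 1"
    and sig: "\<forall>p\<in>P. \<sigma> p = -1 \<or> \<sigma> p = 1"
    and g_def: "\<And>x. g x = (\<Sum>p\<in>P. \<sigma> p * exp (2 * (norm p)\<^sup>2) * exp (- (1/3) * (norm (x - 3 *\<^sub>R p))\<^sup>2))"
    and K: "K \<ge> 1" and Rpos: "R > 0"
    and B_def: "B = 2 * (real CARD('n) * R + 3 * real CARD('n)) + 3"
    and eps: "real n * exp (2 * real CARD('n)) * (B^K / fact K * exp B) \<le> \<epsilon>"
    and glob: "\<And>y. \<bar>g y\<bar> \<le> M'"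
    and s: "s \<in> box_inf R" and \<delta>: "0 < norm (x - s)" "norm (x - s) \<le> 1"
  shows "\<bar>g x - g s\<bar> \<le> 2*\<epsilon> + norm (x - s) * (4 * K^2 * (M' + \<epsilon>))"
proof -
  define d where "d = real CARD('n)"
  define \<delta> where "\<delta> = norm (x - s)"
  define u where "u = (1/\<delta>) *\<^sub>R (x - s)"
  have nu: "norm u = 1" using \<delta> by (simp add: u_def \<delta>_def)
  have xs: "x = s + \<delta> *\<^sub>R u" using \<delta> by (simp add: u_def \<delta>_def)
  define A where "A p = \<sigma> p * exp (2 * (norm p)\<^sup>2) * exp (- (1/3) * (norm (s - 3 *\<^sub>R p))\<^sup>2)" for p
  define b where "b p = u \<bullet> (s - 3 *\<^sub>R p)" for p
  define \<psi> where "\<psi> \<tau> = g (s + \<tau> *\<^sub>R u)" for \<tau>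
  have \<psi>eq: "\<psi> \<tau> = (\<Sum>p\<in>P. A p * exp (-(2*\<tau>*b p + \<tau>^2)/3))" for \<tau>
    unfolding \<psi>_def g_def
  proof (rule sum.cong[OF refl])
    fix p assume "p \<in> P"
    have li: "(norm (s + \<tau> *\<^sub>R u - 3 *\<^sub>R p))^2 = (norm (s - 3 *\<^sub>R p))^2 + 2*\<tau>*b p + \<tau>^2"
      unfolding b_def by (rule line_identity[OF nu])
    have "exp (- (1/3) * (norm (s + \<tau> *\<^sub>R u - 3 *\<^sub>R p))\<^sup>2)
        = exp (- (1/3) * (norm (s - 3 *\<^sub>R p))\<^sup>2 + (-(2*\<tau>*b p + \<tau>^2)/3))"
      unfolding li by (simp add: algebra_simps)
    then show "\<sigma> p * exp (2 * (norm p)\<^sup>2) * exp (- (1/3) * (norm (s + \<tau> *\<^sub>R u - 3 *\<^sub>R p))\<^sup>2)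
        = A p * exp (-(2*\<tau>*b p + \<tau>^2)/3)"
      by (simp only: A_def exp_add mult.assoc)
  qed
  have Bb: "2 * \<bar>b p\<bar> + 3 \<le> B" if p: "p \<in> P" for p
  proof -
    have "\<bar>b p\<bar> \<le> norm u * norm (s - 3 *\<^sub>R p)" unfolding b_def by (rule Cauchy_Schwarz_ineq2)
    also have "\<dots> = norm (s - 3 *\<^sub>R p)" using nu by simp
    also have "\<dots> \<le> norm s + 3 * norm p" using norm_triangle_ineq4[of s "3 *\<^sub>R p"] by simp
    also have "\<dots> \<le> d * R + 3 * d"
      using norm_box[OF s] norm_box[of p 1] p Pbox by (auto simp: d_def)
    finally show ?thesis using B_def by (simp add: d_def)
  qed
  have Aabs: "\<bar>A p\<bar> \<le> exp (2 * d)" if p: "p \<in> P" for p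
  proof -
    have "\<bar>\<sigma> p\<bar> = 1" using sig p by auto
    then have "\<bar>A p\<bar> = exp (2 * (norm p)\<^sup>2) * exp (- (1/3) * (norm (s - 3 *\<^sub>R p))\<^sup>2)"
      by (simp add: A_def abs_mult)
    also have "\<dots> \<le> exp (2 * d) * 1"
      using norm_sq_box1[of p] p Pbox by (intro mult_mono) (auto simp: d_def)
    finally show ?thesis by simp
  qed
  have sumA: "(\<Sum>p\<in>P. \<bar>A p\<bar>) \<le> real n * exp (2 * d)"
    using sum_mono[of P "\<lambda>p. \<bar>A p\<bar>" "\<lambda>p. exp (2*d)"] Aabs cardP by simp
  obtain Pp where Pp: "degree Pp \<le> 2*K" "\<And>\<tau>. \<bar>\<tau>\<bar> \<le> 3 \<Longrightarrow>
     \<bar>(\<Sum>p\<in>P. A p * exp (-(2*\<tau>*b p + \<tau>^2)/3)) - poly Pp \<tau>\<bar> \<le> (\<Sum>p\<in>P. \<bar>A p\<bar>) * (B^K / fact K * exp B)"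
    using taylor_poly[OF fin K, of b B A] Bb by blast
  have Bnn: "B \<ge> 0" using B_def Rpos by simp
  have approx: "\<bar>\<psi> \<tau> - poly Pp \<tau>\<bar> \<le> \<epsilon>" if "\<bar>\<tau>\<bar> \<le> 3" for \<tau>
  proof -
    have "\<bar>\<psi> \<tau> - poly Pp \<tau>\<bar> \<le> (\<Sum>p\<in>P. \<bar>A p\<bar>) * (B^K / fact K * exp B)"
      unfolding \<psi>eq by (rule Pp(2)[OF that])
    also have "\<dots> \<le> real n * exp (2 * d) * (B^K / fact K * exp B)"
      using sumA Bnn by (intro mult_right_mono) auto
    finally show ?thesis using eps by (simp add: d_def)
  qed
  have globpsi: "\<bar>\<psi> \<tau>\<bar> \<le> M'" for \<tau> unfolding \<psi>_def by (rule glob)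
  have "\<bar>\<psi> \<delta> - \<psi> 0\<bar> \<le> 2*\<epsilon> + \<delta> * (4 * K^2 * (M' + \<epsilon>))"
    by (rule poly_diff_bound[OF K Pp(1) approx globpsi]) (use \<delta> in \<open>auto simp: \<delta>_def\<close>)
  moreover have "\<psi> \<delta> = g x" "\<psi> 0 = g s" using xs by (simp_all add: \<psi>_def)
  ultimately show ?thesis by (simp add: \<delta>_def)
qed

theorem lemma1:
  "\<exists>C0 :: real. C0 > 0 \<and> (\<exists>N :: nat. \<forall>n \<ge> N.
     \<forall>(P :: (real ^ 'n) set) (\<sigma> :: real ^ 'n \<Rightarrow> real).
       finite P \<and> card P = n \<and> P \<subseteq> box_inf 1 \<and> (\<forall>p\<in>P. \<sigma> p = -1 \<or> \<sigma> p = 1) \<longrightarrow>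
       (let w = 1 / (C0 * (ln (real n))\<^sup>2);
            R = sqrt (3 * ln (real n)) + 3;
            S0 = grid w \<inter> box_inf R;
            F = (\<lambda>x. \<bar>\<Sum>p\<in>P. \<sigma> p * exp (2 * (norm p)\<^sup>2) * exp (- (1/3) * (norm (x - 3 *\<^sub>R p))\<^sup>2)\<bar>)
        in (SUP x\<in>box_inf R. F x) \<le> 4 * (SUP s\<in>S0. F s) + 7))"
proof -
  define d where "d = real CARD('n)"
  have d1: "d \<ge> 1" by (simp add: d_def)
  define C0 where "C0 = 32 * d * (exp (2*d) + 1)"
  define c1 where "c1 = exp 3 * 2 * d * sqrt 3"
  define c2 where "c2 = exp 3 * (12*d + 3) + 2*d"
  define T where "T = (c1 + c2 + 1)^2"
  define N where "N = nat \<lceil>exp T\<rceil> + 1"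
  have C0pos: "C0 > 0" using d1 by (simp add: C0_def add_pos_pos)
  have c1pos: "c1 \<ge> 0" "c2 \<ge> 0" using d1 by (simp_all add: c1_def c2_def)
  have T1: "T \<ge> 1" using c1pos by (simp add: T_def)
  have main: "(let w = 1 / (C0 * (ln (real n))\<^sup>2);
            R = sqrt (3 * ln (real n)) + 3;
            S0 = grid w \<inter> box_inf R;
            F = (\<lambda>x. \<bar>\<Sum>p\<in>P. \<sigma> p * exp (2 * (norm p)\<^sup>2) * exp (- (1/3) * (norm (x - 3 *\<^sub>R p))\<^sup>2)\<bar>)
        in (SUP x\<in>box_inf R. F x) \<le> 4 * (SUP s\<in>S0. F s) + 7)"
    if nN: "n \<ge> N" and fin: "finite P" and cardP: "card P = n" and Pbox: "P \<subseteq> box_inf 1"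
      and sig: "\<forall>p\<in>P. \<sigma> p = -1 \<or> \<sigma> p = (1::real)"
    for n :: nat and P :: "(real ^ 'n) set" and \<sigma>
  proof -
    define L where "L = ln (real n)"
    define R where "R = sqrt (3 * ln (real n)) + 3"
    define w where "w = 1 / (C0 * (ln (real n))\<^sup>2)"
    define g where "g x = (\<Sum>p\<in>P. \<sigma> p * exp (2 * (norm p)\<^sup>2) * exp (- (1/3) * (norm (x - 3 *\<^sub>R p))\<^sup>2))" for x
    have nT: "real n \<ge> exp T" using nN unfolding N_def by linarith
    have npos: "real n > 0" using nT exp_gt_zero[of T] by linarith
    have LT: "L \<ge> T" using nT npos by (simp add: L_def ln_ge_iff)
    have L1: "L \<ge> 1" using LT T1 by linarith
    have expL: "exp L = real n" using npos by (simp add: L_def)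
    have Rpos: "R > 0" using L1 by (simp add: R_def L_def[symmetric] add_nonneg_pos)
    have wpos: "w > 0" using C0pos L1 by (simp add: w_def L_def[symmetric])
    define K where "K = nat \<lceil>L\<rceil>"
    have ceil1: "\<lceil>L\<rceil> \<ge> 1" using L1 le_of_int_ceiling[of L] by linarith
    have K1: "K \<ge> 1" using ceil1 unfolding K_def by linarith
    have KL: "real K \<ge> L" "real K \<le> 2 * L" using L1 by (simp_all add: K_def) linarith
    define B where "B = 2 * (d * R + 3 * d) + 3"
    have Bpos: "B > 0" using d1 Rpos by (simp add: B_def add_pos_pos)
    define \<epsilon> where "\<epsilon> = real n * exp (2 * d) * (B^K / fact K * exp B)"
    have eps_nn: "\<epsilon> \<ge> 0" using Bpos by (simp add: \<epsilon>_def)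
    have cond: "exp 3 * B + 2*d \<le> L"
    proof -
      have sL: "sqrt L \<ge> c1 + c2 + 1"
        using LT real_sqrt_le_mono[OF LT] c1pos by (simp add: T_def)
      have sL1: "sqrt L \<ge> 1" using sL c1pos by linarith
      have "exp 3 * B + 2*d = c1 * sqrt L + c2"
        by (simp add: B_def R_def L_def[symmetric] c1_def c2_def real_sqrt_mult algebra_simps)
      also have "\<dots> \<le> c1 * sqrt L + c2 * sqrt L"
        using mult_left_mono[OF sL1 c1pos(2)] by simp
      also have "\<dots> = (c1 + c2) * sqrt L" by (simp add: algebra_simps)
      also have "\<dots> \<le> sqrt L * sqrt L" using sL c1pos L1 by (intro mult_right_mono) auto
      also have "\<dots> = L" using L1 by simp
      finally show ?thesis .
    qed
    have eps1: "\<epsilon> \<le> 1"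
      using eps_small[OF L1 KL(1) Bpos cond] d1 expL by (simp add: \<epsilon>_def)
    have term_le: "\<bar>\<sigma> p * exp (2 * (norm p)\<^sup>2) * exp (- (1/3) * (norm (y - 3 *\<^sub>R p))\<^sup>2)\<bar>
        = exp (2 * (norm p)\<^sup>2 + (- (1/3) * (norm (y - 3 *\<^sub>R p))\<^sup>2))" if p: "p \<in> P" for p y
    proof -
      have "\<bar>\<sigma> p\<bar> = 1" using sig p by auto
      then show ?thesis by (simp only: abs_mult exp_add abs_exp_cancel mult_1)
    qed
    have gout: "\<bar>g y\<bar> \<le> exp (2*d)" if y: "y \<notin> box_inf R" for y
    proof -
      have "\<bar>g y\<bar> \<le> (\<Sum>p\<in>P. exp (2*d - L))"
        unfolding g_def
      proof (rule order_trans[OF sum_abs], rule sum_mono)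
        fix p assume p: "p \<in> P"
        have "2 * (norm p)\<^sup>2 + (- (1/3) * (norm (y - 3 *\<^sub>R p))\<^sup>2) \<le> 2 * d - L"
          using outside_exponent[of p y L] p Pbox y L1 by (auto simp: d_def R_def L_def)
        then show "\<bar>\<sigma> p * exp (2 * (norm p)\<^sup>2) * exp (- (1/3) * (norm (y - 3 *\<^sub>R p))\<^sup>2)\<bar> \<le> exp (2*d - L)"
          unfolding term_le[OF p] by simp
      qed
      also have "\<dots> = real n * (exp (2*d) / exp L)" using cardP by (simp add: exp_diff)
      also have "\<dots> = exp (2*d)" using expL npos by simp
      finally show ?thesis .
    qed
    have gall: "\<bar>g y\<bar> \<le> real n * exp (2*d)" for y
    proof -
      have "\<bar>g y\<bar> \<le> (\<Sum>p\<in>P. exp (2*d))"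
        unfolding g_def
      proof (rule order_trans[OF sum_abs], rule sum_mono)
        fix p assume p: "p \<in> P"
        have "2 * (norm p)\<^sup>2 + (- (1/3) * (norm (y - 3 *\<^sub>R p))\<^sup>2) \<le> 2 * d"
        proof -
          have "p \<in> box_inf 1" using p Pbox by auto
          then have "(norm p)\<^sup>2 \<le> d" using norm_sq_box1[of p] by (simp add: d_def)
          moreover have "(norm (y - 3 *\<^sub>R p))\<^sup>2 \<ge> 0" by simp
          ultimately show ?thesis by linarith
        qed
        then show "\<bar>\<sigma> p * exp (2 * (norm p)\<^sup>2) * exp (- (1/3) * (norm (y - 3 *\<^sub>R p))\<^sup>2)\<bar> \<le> exp (2*d)"
          unfolding term_le[OF p] by simp
      qed
      also have "\<dots> = real n * exp (2*d)" using cardP by simp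
      finally show ?thesis .
    qed
    define S0 :: "(real^'n) set" where "S0 = grid w \<inter> box_inf R"
    define M where "M = (SUP x\<in>box_inf R. \<bar>g x\<bar>)"
    define MS where "MS = (SUP s\<in>S0. \<bar>g s\<bar>)"
    have zero_box: "0 \<in> box_inf R" using Rpos by (simp add: box_inf_def)
    have zero_S0: "0 \<in> S0" using zero_box by (auto simp: S0_def grid_def intro: exI[of _ "\<lambda>j. 0"])
    have bdd1: "bdd_above ((\<lambda>x. \<bar>g x\<bar>) ` box_inf R)" by (rule bdd_aboveI2[where M="real n * exp (2*d)"]) (rule gall)
    have bdd2: "bdd_above ((\<lambda>x. \<bar>g x\<bar>) ` S0)" by (rule bdd_aboveI2[where M="real n * exp (2*d)"]) (rule gall)
    have Mup: "\<bar>g x\<bar> \<le> M" if "x \<in> box_inf R" for x unfolding M_def by (rule cSUP_upper[OF that bdd1])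
    have MSup: "\<bar>g x\<bar> \<le> MS" if "x \<in> S0" for x unfolding MS_def by (rule cSUP_upper[OF that bdd2])
    have M0: "M \<ge> 0" using Mup[OF zero_box] by linarith
    have MS0: "MS \<ge> 0" using MSup[OF zero_S0] by linarith
    have glob: "\<bar>g y\<bar> \<le> M + exp (2*d)" for y
    proof (cases "y \<in> box_inf R")
      case True then show ?thesis using Mup[OF True] exp_gt_zero[of "2*d"] by linarith
    next
      case False then show ?thesis using gout[OF False] M0 by linarith
    qed
    define \<eta> where "\<eta> = 1 / (2 * (exp (2*d) + 1))"
    have eta_half: "\<eta> \<le> 1/2" unfolding \<eta>_def
      by (rule aux_half) simp
    have eta_pos: "\<eta> > 0" unfolding \<eta>_def
      by (rule aux_pos) simp
    have eta_id: "\<eta> * (exp (2*d) + 1) = 1/2" unfolding \<eta>_def by (rule aux_id) simp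
    have pt: "\<bar>g x\<bar> \<le> MS + 5/2 + M/2" if x: "x \<in> box_inf R" for x
    proof -
      obtain s where s: "s \<in> grid w" "s \<in> box_inf R" "norm (x - s) \<le> real CARD('n) * w"
        using round_grid[OF wpos x] by blast
      have sS: "s \<in> S0" using s by (simp add: S0_def)
      have gs: "\<bar>g s\<bar> \<le> MS" by (rule MSup[OF sS])
      have \<delta>w: "norm (x - s) \<le> d / (C0 * L^2)" using s(3) by (simp add: d_def w_def L_def)
      have \<delta>4: "norm (x - s) * (4 * real K ^ 2) \<le> \<eta>"
      proof -
        have "4 * real K ^ 2 \<le> 16 * L^2"
          using power_mono[OF KL(2), of 2] KL(1) L1 by (simp add: power_mult_distrib)
        moreover have "0 \<le> d / (C0 * L^2)" using C0pos d1 L1 by (intro divide_nonneg_pos) auto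
        ultimately have "norm (x - s) * (4 * real K ^ 2) \<le> d / (C0 * L^2) * (16 * L^2)"
          by (rule mult_mono[OF \<delta>w]) auto
        also have "\<dots> = 16 * d / C0" using L1 by (simp add: field_simps)
        also have "\<dots> = \<eta>" unfolding C0_def \<eta>_def by (rule aux_c0) (use d1 in auto)
        finally show ?thesis .
      qed
      show ?thesis
      proof (cases "norm (x - s) = 0")
        case True
        then have "x = s" by simp
        then show ?thesis using gs M0 by simp
      next
        case False
        have \<delta>1: "norm (x - s) \<le> 1"
        proof -
          have L2: "1 \<le> L^2" using L1 by (simp add: one_le_power)
          have "C0 \<le> C0 * L^2" using C0pos L2 by simp
          then have "d / (C0 * L^2) \<le> d / C0"
            by (rule divide_left_mono) (use d1 C0pos L2 in \<open>auto intro!: mult_pos_pos\<close>)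
          also have "\<dots> \<le> 1" unfolding C0_def by (rule aux_le1) (use d1 in auto)
          finally show ?thesis using \<delta>w by linarith
        qed
        have "\<bar>g x - g s\<bar> \<le> 2*\<epsilon> + norm (x - s) * (4 * real K^2 * ((M + exp (2*d)) + \<epsilon>))"
        proof -
          have Beq: "B = 2 * (real CARD('n) * R + 3 * real CARD('n)) + 3" by (simp add: B_def d_def)
          have epsle: "real n * exp (2 * real CARD('n)) * (B^K / fact K * exp B) \<le> \<epsilon>"
            by (simp add: \<epsilon>_def d_def)
          show ?thesis
            by (rule key_point[OF fin cardP Pbox sig g_def K1 Rpos Beq epsle glob s(2)])
               (use False \<delta>1 in auto)
        qed
        also have "\<dots> = 2*\<epsilon> + (norm (x - s) * (4 * real K^2)) * ((M + exp (2*d)) + \<epsilon>)" by simp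
        also have "\<dots> \<le> 2*\<epsilon> + \<eta> * ((M + exp (2*d)) + \<epsilon>)"
          using \<delta>4 M0 eps_nn by (intro add_left_mono mult_right_mono) auto
        also have "\<dots> \<le> 2 + \<eta> * M + \<eta> * (exp (2*d) + 1)"
        proof -
          have "\<eta> * \<epsilon> \<le> \<eta> * 1" using eps1 eta_pos by (intro mult_left_mono) auto
          then show ?thesis using eps1 by (simp add: algebra_simps)
        qed
        also have "\<dots> \<le> 2 + M/2 + 1/2"
        proof -
          have "\<eta> * M \<le> 1/2 * M" using eta_half M0 by (rule mult_right_mono)
          then show ?thesis using eta_id by linarith
        qed
        finally show ?thesis using gs by linarith
      qed
    qed
    have "M \<le> MS + 5/2 + M/2"
      unfolding M_def by (rule cSUP_least) (use zero_box pt M_def in auto)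
    then have final: "M \<le> 4 * MS + 7" using MS0 by linarith
    show ?thesis
      using final unfolding Let_def M_def MS_def S0_def R_def w_def g_def .
  qed
  show ?thesis
    using main C0pos by blast
qed

end
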